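(* Let $n\ge 3$, let $b_1,\dots,b_{n-1}\in\mathbb{C}$, and let $B\in M_n(\mathbb{C})$ be the matrix with $B_{i,i+1}=b_i$, $B_{i+1,i}=-\bar b_i$ for $i=1,\dots,n-1$, and all other entries equal to $0$. Then the operator norm of $B$ satisfies $$\max_{1\le i\le n-2}\sqrt{|b_i|^2+|b_{i+1}|^2}\le\|B\|,\qquad \frac{2}{n}\sum_{i=1}^{n-1}|b_i|\le\|B\|,$$ $$\|B\|\le\max_{1\le i\le n-2}\big(|b_i|+|b_{i+1}|\big),\qquad \|B\|\le 2\cos\Big(\frac{\pi}{n+1}\Big)\max_{1\le i\le n-1}|b_i|.$$ *)

theory Defs
  imports "HOL-Analysis.Analysis"
begin

text \<open>Vectors in C^n are represented as functions nat => complex, only indices i < n matter;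
  n x n matrices as nat => nat => complex, only indices i, j < n matter (0-based).\<close>

definition vec_norm :: "nat \<Rightarrow> (nat \<Rightarrow> complex) \<Rightarrow> real" where
  "vec_norm n x = sqrt (\<Sum>i<n. (cmod (x i))\<^sup>2)"

definition mat_vec :: "nat \<Rightarrow> (nat \<Rightarrow> nat \<Rightarrow> complex) \<Rightarrow> (nat \<Rightarrow> complex) \<Rightarrow> (nat \<Rightarrow> complex)" where
  "mat_vec n A x = (\<lambda>i. \<Sum>j<n. A i j * x j)"

definition op_norm :: "nat \<Rightarrow> (nat \<Rightarrow> nat \<Rightarrow> complex) \<Rightarrow> real" where
  "op_norm n A = Sup {vec_norm n (mat_vec n A x) | x. vec_norm n x \<le> 1}"

text \<open>The skew-type tridiagonal matrix: B(i,i+1) = b i, B(i+1,i) = - cnj (b i) for i < n-1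
  (0-based; b 0 .. b (n-2) correspond to b_1 .. b_(n-1)).\<close>
definition tridiag :: "nat \<Rightarrow> (nat \<Rightarrow> complex) \<Rightarrow> nat \<Rightarrow> nat \<Rightarrow> complex" where
  "tridiag n b i j =
     (if j = i + 1 \<and> i + 1 < n then b i
      else if i = j + 1 \<and> j + 1 < n then - cnj (b j)
      else 0)"

end

theory Submission
  imports Defs
begin

lemma cs_weighted:
  fixes a v y :: "nat \<Rightarrow> real"
  assumes "\<And>j. a j \<ge> 0" "\<And>j. v j > 0"
  shows "(\<Sum>j\<in>J. a j * y j)\<^sup>2 \<le> (\<Sum>j\<in>J. a j * v j) * (\<Sum>j\<in>J. a j * (y j)\<^sup>2 / v j)"
proof -
  have e1: "a j * y j = sqrt (a j * v j) * (sqrt (a j / v j) * y j)" for j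
  proof -
    have "sqrt (a j * v j) * sqrt (a j / v j) = sqrt (a j * v j * (a j / v j))"
      by (rule real_sqrt_mult[symmetric])
    also have "a j * v j * (a j / v j) = (a j)\<^sup>2" using assms(2)[of j]
      by (simp add: power2_eq_square field_simps)
    finally show ?thesis using assms(1)[of j] by simp
  qed
  have e2: "(sqrt (a j * v j))\<^sup>2 = a j * v j" for j
    using assms(1)[of j] assms(2)[of j] by simp
  have e3: "(sqrt (a j / v j) * y j)\<^sup>2 = a j * (y j)\<^sup>2 / v j" for j
    using assms(1)[of j] assms(2)[of j] by (simp add: power_mult_distrib)
  show ?thesis
    using Cauchy_Schwarz_ineq_sum[of "\<lambda>j. sqrt (a j * v j)" "\<lambda>j. sqrt (a j / v j) * y j" J]
    by (simp only: e1[symmetric] e2 e3)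
qed

lemma schur:
  fixes A :: "nat \<Rightarrow> nat \<Rightarrow> real" and v y :: "nat \<Rightarrow> real"
  assumes A0: "\<And>i j. A i j \<ge> 0" and sym: "\<And>i j. i < n \<Longrightarrow> j < n \<Longrightarrow> A i j = A j i"
    and v0: "\<And>j. v j > 0" and row: "\<And>i. i < n \<Longrightarrow> (\<Sum>j<n. A i j * v j) \<le> l * v i"
    and l0: "l \<ge> 0"
  shows "(\<Sum>i<n. (\<Sum>j<n. A i j * y j)\<^sup>2) \<le> l\<^sup>2 * (\<Sum>i<n. (y i)\<^sup>2)"
proof -
  have "(\<Sum>i<n. (\<Sum>j<n. A i j * y j)\<^sup>2) \<le> (\<Sum>i<n. l * v i * (\<Sum>j<n. A i j * (y j)\<^sup>2 / v j))"
  proof (rule sum_mono)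
    fix i assume i: "i \<in> {..<n}"
    have nn: "0 \<le> (\<Sum>j<n. A i j * (y j)\<^sup>2 / v j)"
      by (intro sum_nonneg) (use A0 v0 in \<open>auto intro!: divide_nonneg_pos\<close>)
    have "(\<Sum>j<n. A i j * y j)\<^sup>2 \<le> (\<Sum>j<n. A i j * v j) * (\<Sum>j<n. A i j * (y j)\<^sup>2 / v j)"
      by (rule cs_weighted) (use A0 v0 in auto)
    also have "\<dots> \<le> l * v i * (\<Sum>j<n. A i j * (y j)\<^sup>2 / v j)"
      by (rule mult_right_mono[OF row nn]) (use i in auto)
    finally show "(\<Sum>j<n. A i j * y j)\<^sup>2 \<le> l * v i * (\<Sum>j<n. A i j * (y j)\<^sup>2 / v j)" .
  qed
  also have "\<dots> = l * (\<Sum>j<n. (y j)\<^sup>2 / v j * (\<Sum>i<n. A j i * v i))"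
    apply (simp add: sum_distrib_left sum_distrib_right)
    apply (subst sum.swap)
    apply (intro sum.cong refl)
    using sym by (simp add: field_simps)
  also have "\<dots> \<le> l * (\<Sum>j<n. (y j)\<^sup>2 / v j * (l * v j))"
    apply (intro mult_left_mono[OF _ l0] sum_mono mult_left_mono)
    using row v0 by (auto intro!: divide_nonneg_pos)
  also have "\<dots> = l\<^sup>2 * (\<Sum>i<n. (y i)\<^sup>2)"
    unfolding sum_distrib_left power2_eq_square
    by (intro sum.cong refl) (use v0 in \<open>simp add: field_simps less_imp_neq[symmetric]\<close>)
  finally show ?thesis .
qed


lemma tri_sum:
  assumes "i < n"
  shows "(\<Sum>j<n. tridiag n b i j * f j) =
    (if i + 1 < n then b i * f (i+1) else 0) - (if 0 < i then cnj (b (i-1)) * f (i-1) else 0)"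
proof -
  have "tridiag n b i j * f j = (if j = i + 1 then (if i + 1 < n then b i * f j else 0) else 0)
      + (if j = i - 1 then (if 0 < i then - cnj (b (i-1)) * f j else 0) else 0)" for j
    using assms by (auto simp: tridiag_def)
  hence "(\<Sum>j<n. tridiag n b i j * f j) = (\<Sum>j<n. (if j = i + 1 then (if i + 1 < n then b i * f j else 0) else 0))
      + (\<Sum>j<n. (if j = i - 1 then (if 0 < i then - cnj (b (i-1)) * f j else 0) else 0))"
    by (simp add: sum.distrib)
  also have "\<dots> = (if i + 1 < n then b i * f (i+1) else 0) - (if 0 < i then cnj (b (i-1)) * f (i-1) else 0)"
    using assms by (auto simp: sum.delta)
  finally show ?thesis .
qed

lemma tri_abs_sum:
  assumes "i < n"
  shows "(\<Sum>j<n. cmod (tridiag n b i j) * f j) =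
    (if i + 1 < n then cmod (b i) * f (i+1) else 0) + (if 0 < i then cmod (b (i-1)) * f (i-1) else 0)"
proof -
  have "cmod (tridiag n b i j) * f j = (if j = i + 1 then (if i + 1 < n then cmod (b i) * f j else 0) else 0)
      + (if j = i - 1 then (if 0 < i then cmod (b (i-1)) * f j else 0) else 0)" for j
    using assms by (auto simp: tridiag_def)
  hence "(\<Sum>j<n. cmod (tridiag n b i j) * f j) = (\<Sum>j<n. (if j = i + 1 then (if i + 1 < n then cmod (b i) * f j else 0) else 0))
      + (\<Sum>j<n. (if j = i - 1 then (if 0 < i then cmod (b (i-1)) * f j else 0) else 0))"
    by (simp add: sum.distrib)
  also have "\<dots> = (if i + 1 < n then cmod (b i) * f (i+1) else 0) + (if 0 < i then cmod (b (i-1)) * f (i-1) else 0)"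
    using assms by (auto simp: sum.delta)
  finally show ?thesis .
qed

lemma tri_sym: "cmod (tridiag n b i j) = cmod (tridiag n b j i)"
  by (auto simp: tridiag_def)

lemma upper_vec:
  assumes v0: "\<And>j. v j > 0" and l0: "l \<ge> 0"
    and row: "\<And>i. i < n \<Longrightarrow> (if i + 1 < n then cmod (b i) * v (i+1) else 0)
                  + (if 0 < i then cmod (b (i-1)) * v (i-1) else 0) \<le> l * v i"
  shows "vec_norm n (mat_vec n (tridiag n b) x) \<le> l * vec_norm n x"
proof -
  let ?A = "\<lambda>i j. cmod (tridiag n b i j)"
  have "(\<Sum>i<n. (cmod (mat_vec n (tridiag n b) x i))\<^sup>2) \<le> (\<Sum>i<n. (\<Sum>j<n. ?A i j * cmod (x j))\<^sup>2)"
  proof (rule sum_mono)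
    fix i
    have "cmod (mat_vec n (tridiag n b) x i) \<le> (\<Sum>j<n. ?A i j * cmod (x j))"
      unfolding mat_vec_def by (rule order_trans[OF norm_sum]) (simp add: norm_mult)
    thus "(cmod (mat_vec n (tridiag n b) x i))\<^sup>2 \<le> (\<Sum>j<n. ?A i j * cmod (x j))\<^sup>2"
      by (intro power_mono) auto
  qed
  also have "\<dots> \<le> l\<^sup>2 * (\<Sum>i<n. (cmod (x i))\<^sup>2)"
  proof (rule schur[where n=n and A="?A" and v=v and l=l and y="\<lambda>j. cmod (x j)", OF _ _ v0 _ l0])
    fix i assume i: "i < n"
    have "(\<Sum>j<n. ?A i j * v j) = (if i + 1 < n then cmod (b i) * v (i+1) else 0)
                  + (if 0 < i then cmod (b (i-1)) * v (i-1) else 0)" by (rule tri_abs_sum[OF i])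
    thus "(\<Sum>j<n. ?A i j * v j) \<le> l * v i" using row[OF i] by linarith
  qed (auto simp: tri_sym)
  finally have "sqrt (\<Sum>i<n. (cmod (mat_vec n (tridiag n b) x i))\<^sup>2) \<le> sqrt (l\<^sup>2 * (\<Sum>i<n. (cmod (x i))\<^sup>2))"
    by (rule real_sqrt_le_mono)
  thus ?thesis using l0 by (simp add: vec_norm_def real_sqrt_mult)
qed

lemma op_norm_le:
  assumes "\<And>x. vec_norm n (mat_vec n A x) \<le> l * vec_norm n x" "l \<ge> 0"
  shows "op_norm n A \<le> l"
  unfolding op_norm_def
proof (rule cSup_least)
  show "{vec_norm n (mat_vec n A x) |x. vec_norm n x \<le> 1} \<noteq> {}" by (auto intro!: exI[of _ "\<lambda>_. 0"] simp: vec_norm_def)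
next
  fix y assume "y \<in> {vec_norm n (mat_vec n A x) |x. vec_norm n x \<le> 1}"
  then obtain x where "y = vec_norm n (mat_vec n A x)" "vec_norm n x \<le> 1" by auto
  thus "y \<le> l" using assms(1)[of x] mult_left_mono[OF \<open>vec_norm n x \<le> 1\<close> assms(2)] by simp
qed

lemma op_norm_ge:
  assumes "\<And>x. vec_norm n (mat_vec n A x) \<le> l * vec_norm n x" "vec_norm n x \<le> 1"
  shows "vec_norm n (mat_vec n A x) \<le> op_norm n A"
  unfolding op_norm_def
proof (rule cSup_upper)
  show "vec_norm n (mat_vec n A x) \<in> {vec_norm n (mat_vec n A x) |x. vec_norm n x \<le> 1}" using assms(2) by auto
  show "bdd_above {vec_norm n (mat_vec n A x) |x. vec_norm n x \<le> 1}"
  proof (rule bdd_aboveI[where M="max l 0 * 1"])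
    fix y assume "y \<in> {vec_norm n (mat_vec n A x) |x. vec_norm n x \<le> 1}"
    then obtain x where "y = vec_norm n (mat_vec n A x)" "vec_norm n x \<le> 1" by auto
    moreover have "vec_norm n x \<ge> 0" by (simp add: vec_norm_def sum_nonneg)
    ultimately show "y \<le> max l 0 * 1"
    proof -
      assume h: "y = vec_norm n (mat_vec n A x)" "vec_norm n x \<le> 1" "vec_norm n x \<ge> 0"
      have "y \<le> l * vec_norm n x" using assms(1)[of x] h(1) by simp
      also have "\<dots> \<le> max l 0 * vec_norm n x" by (rule mult_right_mono[OF _ h(3)]) simp
      also have "\<dots> \<le> max l 0 * 1" by (rule mult_left_mono[OF h(2)]) simp
      finally show ?thesis .
    qed
  qed
qed


lemma tri_bound:
  assumes "n \<ge> 3"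
  shows "vec_norm n (mat_vec n (tridiag n b) x) \<le> (MAX i\<in>{..<n-2}. cmod (b i) + cmod (b (i+1))) * vec_norm n x"
proof (rule upper_vec[where v="\<lambda>_. 1"])
  let ?M = "MAX i\<in>{..<n-2}. cmod (b i) + cmod (b (i+1))"
  have M: "cmod (b i) + cmod (b (i+1)) \<le> ?M" if "i < n - 2" for i
    using that by (intro Max_ge) auto
  have M1: "cmod (b i) \<le> ?M" if "i < n - 2" for i
    using M[OF that] norm_ge_zero[of "b (i+1)"] by linarith
  have M2: "cmod (b (i+1)) \<le> ?M" if "i < n - 2" for i
    using M[OF that] norm_ge_zero[of "b i"] by linarith
  have n0: "0 < n - 2" using assms by simp
  show "0 \<le> ?M" using M1[OF n0] norm_ge_zero[of "b 0"] by linarith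
  fix i assume i: "i < n"
  show "(if i + 1 < n then cmod (b i) * 1 else 0) + (if 0 < i then cmod (b (i - 1)) * 1 else 0) \<le> ?M * 1"
  proof (cases "i = 0")
    case True
    have "1 < n" using assms by simp
    thus ?thesis using M1[OF n0] True by simp
  next
    case False
    show ?thesis
    proof (cases "i + 1 < n")
      case True
      have "i - 1 < n - 2" using True False by simp
      from M[OF this] show ?thesis using False True by simp
    next
      case F2: False
      hence "i = n - 1" using i by simp
      have "n - 3 < n - 2" using assms by simp
      from M2[OF this] have "cmod (b (i - 1)) \<le> ?M"
        using \<open>i = n - 1\<close> assms by (simp add: numeral_3_eq_3 numeral_2_eq_2 Suc_diff_Suc)
      thus ?thesis using F2 False by simp
    qed
  qed
qed simp

lemma lower1:
  assumes i: "i + 2 < n" and bnd: "\<And>x. vec_norm n (mat_vec n (tridiag n b) x) \<le> l * vec_norm n x"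
  shows "sqrt ((cmod (b i))\<^sup>2 + (cmod (b (i+1)))\<^sup>2) \<le> op_norm n (tridiag n b)"
proof -
  define x :: "nat \<Rightarrow> complex" where "x j = (if j = i + 1 then 1 else 0)" for j
  have "(\<Sum>j<n. (cmod (x j))\<^sup>2) = (\<Sum>j<n. if j = i + 1 then 1 else 0)"
    by (intro sum.cong) (auto simp: x_def)
  also have "\<dots> = 1" using i by (simp add: sum.delta)
  finally have nx: "vec_norm n x = 1" by (simp add: vec_norm_def)
  have pt: "(cmod (mat_vec n (tridiag n b) x k))\<^sup>2 =
     (if k = i then (cmod (b i))\<^sup>2 else 0) + (if k = i + 2 then (cmod (b (i+1)))\<^sup>2 else 0)"
    if k: "k < n" for k
  proof -
    have "mat_vec n (tridiag n b) x k = (if k + 1 < n then b k * x (k+1) else 0) - (if 0 < k then cnj (b (k-1)) * x (k-1) else 0)"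
      unfolding mat_vec_def by (rule tri_sum[OF k])
    thus ?thesis using i k by (auto simp: x_def)
  qed
  have "(\<Sum>k<n. (cmod (mat_vec n (tridiag n b) x k))\<^sup>2) =
     (\<Sum>k<n. (if k = i then (cmod (b i))\<^sup>2 else 0) + (if k = i + 2 then (cmod (b (i+1)))\<^sup>2 else 0))"
    by (intro sum.cong) (auto simp: pt)
  also have "\<dots> = (cmod (b i))\<^sup>2 + (cmod (b (i+1)))\<^sup>2"
    using i by (simp add: sum.distrib sum.delta)
  finally have "vec_norm n (mat_vec n (tridiag n b) x) = sqrt ((cmod (b i))\<^sup>2 + (cmod (b (i+1)))\<^sup>2)"
    by (simp add: vec_norm_def)
  moreover have "vec_norm n (mat_vec n (tridiag n b) x) \<le> op_norm n (tridiag n b)"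
    by (rule op_norm_ge[OF bnd]) (simp add: nx)
  ultimately show ?thesis by simp
qed


lemma lower2:
  assumes n: "n \<ge> 1" and bnd: "\<And>x. vec_norm n (mat_vec n (tridiag n b) x) \<le> l * vec_norm n x"
  shows "2 / real n * (\<Sum>i<n-1. cmod (b i)) \<le> op_norm n (tridiag n b)"
proof -
  define u where "u k = (if b k = 0 then 1 else \<i> * cnj (b k) / of_real (cmod (b k)))" for k
  define w where "w k = (\<Prod>j<k. u j)" for k
  define x where "x k = w k / of_real (sqrt (real n))" for k
  define c where "c k = \<i> * of_real (cmod (b k)) / of_real (real n)" for k
  have nu: "cmod (u k) = 1" for k
  proof (cases "b k = 0")
    case False
    have "cmod (u k) = cmod (cnj (b k)) / cmod (complex_of_real (cmod (b k)))"
      using False by (simp add: u_def norm_mult norm_divide)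
    thus ?thesis using False by simp
  qed (simp add: u_def)
  have nw: "cmod (w k) = 1" for k
    by (induction k) (auto simp: w_def norm_mult nu)
  have ww: "cnj (w k) * w k = 1" for k
    using complex_norm_square[of "w k"] nw[of k] by (simp add: mult.commute)
  have bu: "b k * u k = \<i> * of_real (cmod (b k))" for k
  proof (cases "b k = 0")
    case False
    have "b k * cnj (b k) = of_real ((cmod (b k))\<^sup>2)" by (rule complex_norm_square[symmetric])
    thus ?thesis using False unfolding u_def
      by (simp add: field_simps power2_eq_square)
  qed (simp add: u_def)
  have sq: "of_real (sqrt (real n)) * of_real (sqrt (real n)) = (of_real (real n) :: complex)"
  proof -
    have "sqrt (real n) * sqrt (real n) = real n" by simp
    hence "of_real (sqrt (real n) * sqrt (real n)) = (of_real (real n) :: complex)" by (simp only:)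
    thus ?thesis by (simp only: of_real_mult)
  qed
  have key: "cnj (x k) * (b k * x (Suc k)) = c k" for k
  proof -
    have ws: "w (Suc k) = w k * u k" by (simp add: w_def)
    have "cnj (x k) * (b k * x (Suc k)) = cnj (w k) / of_real (sqrt (real n)) * (b k * (w k * u k / of_real (sqrt (real n))))"
      by (simp add: x_def ws)
    also have "\<dots> = (cnj (w k) * w k) * (b k * u k) / (of_real (sqrt (real n)) * of_real (sqrt (real n)))"
      by (simp only: divide_inverse inverse_mult_distrib) (simp only: ac_simps)
    also have "\<dots> = c k" by (simp only: ww bu sq) (simp add: c_def)
    finally show ?thesis .
  qed
  have key2: "cnj (x (Suc j)) * (cnj (b j) * x j) = - c j" for j
  proof -
    have "cnj (x (Suc j)) * (cnj (b j) * x j) = cnj (cnj (x j) * (b j * x (Suc j)))"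
      unfolding complex_cnj_mult complex_cnj_cnj by (simp only: ac_simps)
    also have "\<dots> = cnj (c j)" by (simp only: key)
    also have "\<dots> = - c j" by (simp add: c_def)
    finally show ?thesis .
  qed
  obtain m where m: "n = Suc m" using n by (cases n) auto
  let ?y = "mat_vec n (tridiag n b) x"
  have "(\<Sum>k<n. cnj (x k) * ?y k) = (\<Sum>k<n. (if k + 1 < n then c k else 0) + (if 0 < k then c (k-1) else 0))"
  proof (intro sum.cong refl)
    fix k assume k: "k \<in> {..<n}"
    have "?y k = (if k + 1 < n then b k * x (k+1) else 0) - (if 0 < k then cnj (b (k-1)) * x (k-1) else 0)"
      unfolding mat_vec_def by (rule tri_sum) (use k in auto)
    thus "cnj (x k) * ?y k = (if k + 1 < n then c k else 0) + (if 0 < k then c (k-1) else 0)"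
      by (cases k) (auto simp: right_diff_distrib key key2)
  qed
  also have "\<dots> = 2 * (\<Sum>k<n-1. c k)"
  proof -
    have A: "(\<Sum>k<Suc m. if k + 1 < Suc m then c k else 0) = (\<Sum>k<m. c k)"
      by (auto intro!: sum.cong)
    have B: "(\<Sum>k<Suc m. if 0 < k then c (k-1) else 0) = (\<Sum>k<m. c k)"
      by (simp only: sum.lessThan_Suc_shift) simp
    show ?thesis unfolding m sum.distrib A B by simp
  qed
  also have "\<dots> = 2 * \<i> / of_real (real n) * of_real (\<Sum>k<n-1. cmod (b k))"
    by (simp add: c_def sum_distrib_left sum_divide_distrib mult.assoc)
  finally have S: "(\<Sum>k<n. cnj (x k) * ?y k) = 2 * \<i> / of_real (real n) * of_real (\<Sum>k<n-1. cmod (b k))" .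
  have "2 / real n * (\<Sum>i<n-1. cmod (b i)) = cmod (\<Sum>k<n. cnj (x k) * ?y k)"
    unfolding S by (simp add: norm_mult norm_divide sum_nonneg del: of_real_sum)
  also have "\<dots> \<le> (\<Sum>k<n. \<bar>cmod (x k)\<bar> * \<bar>cmod (?y k)\<bar>)"
    by (rule order_trans[OF norm_sum]) (simp add: norm_mult)
  also have "\<dots> \<le> L2_set (\<lambda>k. cmod (x k)) {..<n} * L2_set (\<lambda>k. cmod (?y k)) {..<n}"
    by (rule L2_set_mult_ineq)
  also have "\<dots> = vec_norm n x * vec_norm n ?y"
    by (simp add: L2_set_def vec_norm_def)
  also have "vec_norm n x = 1"
  proof -
    have "(\<Sum>k<n. (cmod (x k))\<^sup>2) = (\<Sum>k<n. 1 / real n)"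
      by (intro sum.cong refl) (simp add: x_def norm_divide nw power_divide)
    also have "\<dots> = 1" using n by simp
    finally show ?thesis by (simp add: vec_norm_def)
  qed
  also have "vec_norm n ?y \<le> op_norm n (tridiag n b)"
    by (rule op_norm_ge[OF bnd]) (simp add: \<open>vec_norm n x = 1\<close>)
  finally show ?thesis by simp
qed


lemma tri_bound2:
  assumes n3: "n \<ge> 3"
  shows "vec_norm n (mat_vec n (tridiag n b) x) \<le> 2 * cos (pi / real (n + 1)) * (MAX i\<in>{..<n-1}. cmod (b i)) * vec_norm n x"
proof -
  define h where "h = pi / real (n + 1)"
  define m where "m = (MAX i\<in>{..<n-1}. cmod (b i))"
  define v where "v j = (if j < n then sin (real (j+1) * h) else 1)" for j
  have hpos: "h > 0" by (simp add: h_def)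
  have mb: "cmod (b i) \<le> m" if "i < n - 1" for i
    unfolding m_def using that by (intro Max_ge) auto
  have m0: "m \<ge> 0" using order_trans[OF norm_ge_zero mb[of 0]] n3 by simp
  have hn: "real (n+1) * h = pi" by (simp add: h_def)
  have sinpos: "sin (real k * h) > 0" if "0 < k" "k < n + 1" for k
  proof (rule sin_gt_zero)
    show "0 < real k * h" using that hpos by simp
    have "real k * h < real (n+1) * h" using that hpos by (intro mult_strict_right_mono) auto
    thus "real k * h < pi" using hn by simp
  qed
  have cos0: "cos h \<ge> 0"
  proof (rule cos_ge_zero)
    show "- (pi / 2) \<le> h" using hpos pi_gt_zero by linarith
    have "real (n+1) \<ge> 2" using n3 by simp
    hence "pi / real (n + 1) \<le> pi / 2" by (intro divide_left_mono) auto
    thus "h \<le> pi / 2" by (simp add: h_def)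
  qed
  show ?thesis unfolding h_def[symmetric] m_def[symmetric]
  proof (rule upper_vec[where v=v])
    show "0 < v j" for j using sinpos[of "j+1"] by (simp add: v_def)
    show "0 \<le> 2 * cos h * m" using cos0 m0 by simp
    fix i assume i: "i < n"
    have T1: "(if i + 1 < n then cmod (b i) * v (i+1) else 0) \<le> m * sin (real (i+1) * h + h)"
    proof (cases "i + 1 < n")
      case True
      have e: "v (i+1) = sin (real (i+1) * h + h)" using True by (simp add: v_def algebra_simps)
      show ?thesis unfolding e using True mb[of i] sinpos[of "i+2"]
        by (simp add: mult_right_mono algebra_simps)
    next
      case False
      hence ni: "n = i + 1" using i by simp
      have "real (i+1) * h + h = real (n+1) * h" unfolding ni by (simp add: algebra_simps)
      hence "real (i+1) * h + h = pi" using hn by simp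
      thus ?thesis using False by simp
    qed
    have T2: "(if 0 < i then cmod (b (i-1)) * v (i-1) else 0) \<le> m * sin (real (i+1) * h - h)"
    proof (cases "0 < i")
      case True
      have e: "v (i-1) = sin (real (i+1) * h - h)" using True i by (simp add: v_def algebra_simps of_nat_diff)
      show ?thesis unfolding e using True i mb[of "i-1"] sinpos[of "i"]
        by (simp add: mult_right_mono algebra_simps)
    next
      case False thus ?thesis by simp
    qed
    have "m * sin (real (i+1) * h + h) + m * sin (real (i+1) * h - h) = 2 * cos h * m * v i"
    proof -
      have sa: "sin (a + c) + sin (a - c) = 2 * sin a * cos c" for a c :: real
        by (simp add: sin_add sin_diff)
      have vi: "v i = sin (real (i+1) * h)" using i by (simp add: v_def)
      show ?thesis unfolding vi distrib_left[symmetric] sa by simp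
    qed
    thus "(if i + 1 < n then cmod (b i) * v (i+1) else 0) + (if 0 < i then cmod (b (i-1)) * v (i-1) else 0) \<le> 2 * cos h * m * v i"
      using T1 T2 by linarith
  qed
qed


lemma cos_nonneg_aux: "n \<ge> 1 \<Longrightarrow> cos (pi / real (n + 1)) \<ge> 0"
proof (rule cos_ge_zero)
  have "pi / real (n + 1) > 0" by simp
  thus "- (pi / 2) \<le> pi / real (n + 1)" using pi_gt_zero by linarith
  assume "n \<ge> 1"
  hence "real (n+1) \<ge> 2" by simp
  thus "pi / real (n + 1) \<le> pi / 2" by (intro divide_left_mono) auto
qed

theorem mainTheorem3:
  fixes n :: nat and b :: "nat \<Rightarrow> complex"
  assumes "n \<ge> 3"
  shows "(MAX i\<in>{..<n-2}. sqrt ((cmod (b i))\<^sup>2 + (cmod (b (i+1)))\<^sup>2)) \<le> op_norm n (tridiag n b)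
       \<and> 2 / real n * (\<Sum>i<n-1. cmod (b i)) \<le> op_norm n (tridiag n b)
       \<and> op_norm n (tridiag n b) \<le> (MAX i\<in>{..<n-2}. cmod (b i) + cmod (b (i+1)))
       \<and> op_norm n (tridiag n b) \<le> 2 * cos (pi / real (n + 1)) * (MAX i\<in>{..<n-1}. cmod (b i))"
proof (intro conjI)
  let ?M = "MAX i\<in>{..<n-2}. cmod (b i) + cmod (b (i+1))"
  have bnd: "\<And>x. vec_norm n (mat_vec n (tridiag n b) x) \<le> ?M * vec_norm n x"
    by (rule tri_bound[OF assms])
  have M0: "?M \<ge> 0"
  proof -
    have "cmod (b 0) + cmod (b (0+1)) \<le> ?M" using assms by (intro Max_ge) auto
    moreover have "0 \<le> cmod (b 0) + cmod (b (0+1))" by simp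
    ultimately show ?thesis by linarith
  qed
  have m0: "(MAX i\<in>{..<n-1}. cmod (b i)) \<ge> 0"
    using assms by (intro order_trans[OF norm_ge_zero[of "b 0"]] Max_ge) auto
  show "(MAX i\<in>{..<n-2}. sqrt ((cmod (b i))\<^sup>2 + (cmod (b (i+1)))\<^sup>2)) \<le> op_norm n (tridiag n b)"
  proof (rule Max.boundedI)
    show "finite ((\<lambda>i. sqrt ((cmod (b i))\<^sup>2 + (cmod (b (i+1)))\<^sup>2)) ` {..<n-2})" by simp
    show "(\<lambda>i. sqrt ((cmod (b i))\<^sup>2 + (cmod (b (i+1)))\<^sup>2)) ` {..<n-2} \<noteq> {}"
    proof -
      have "(0::nat) \<in> {..<n-2}" using assms by simp
      thus ?thesis by blast
    qed
    fix a assume "a \<in> (\<lambda>i. sqrt ((cmod (b i))\<^sup>2 + (cmod (b (i+1)))\<^sup>2)) ` {..<n-2}"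
    then obtain i where i: "i < n - 2" and a: "a = sqrt ((cmod (b i))\<^sup>2 + (cmod (b (i+1)))\<^sup>2)" by auto
    have "i + 2 < n" using i by simp
    from lower1[OF this bnd] show "a \<le> op_norm n (tridiag n b)" unfolding a .
  qed
  show "2 / real n * (\<Sum>i<n-1. cmod (b i)) \<le> op_norm n (tridiag n b)"
    using assms by (intro lower2[OF _ bnd]) simp
  show "op_norm n (tridiag n b) \<le> ?M"
    by (rule op_norm_le[OF bnd M0])
  show "op_norm n (tridiag n b) \<le> 2 * cos (pi / real (n + 1)) * (MAX i\<in>{..<n-1}. cmod (b i))"
    using assms cos_nonneg_aux[of n] m0 by (intro op_norm_le[OF tri_bound2]) auto
qed

end
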